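(* Fix a user association $\mathbf x=(x_{ij})$ with $x_{ij}\in\{0,1\}$ and $\sum_{i\in\mathcal I}x_{ij}=1$ for every $j\in\mathcal J$. Consider the load distribution and power control problem \[ \max_{\mathbf d,\mathbf p}\ \sum_{i\in\mathcal I}\sum_{j\in\mathcal J}\omega_j x_{ij}\log_2\!\left(d_i\log_2\!\left(1+\frac{p_i g_{ij}}{\sum_{k\in\mathcal I\setminus\{i\}}d_k p_k g_{kj}+\sigma^2}\right)\right)+C \] subject to $0\le d_i\le 1$ and $0\le p_i\le P_i$ for all $i\in\mathcal I$, where $C=\sum_{i\in\mathcal I}\sum_{j\in\mathcal J}\omega_j x_{ij}\log_2\!\big(KB\omega_j/\sum_{l\in\mathcal J}\omega_l x_{il}\big)$ is a constant, terms with $x_{ij}=0$ are taken to be $0$, and it is assumed that if either of $p_i$ and $d_i$ is $0$ then the other is $0$ as well. Then for each $i\in\mathcal I$, the optimal load satisfies $d_i^*=1$ if there exists at least one user $j$ with $x_{ij}=1$, and $d_i^*=0$ otherwise.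
   Context: $\mathcal I=\{1,\dots,I\}$ is the set of base stations and $\mathcal J=\{1,\dots,J\}$ the set of users; $x_{ij}=1$ means user $j$ is associated with base station $i$. $d_i$ is the load and $p_i$ the per-resource-block transmit power of base station $i$, with maximum power $P_i>0$. Constants $K,B>0$, channel gains $g_{ij}>0$, noise power $\sigma^2>0$ and user priorities $\omega_j>0$ are given. *)

theory Defs
  imports "HOL-Analysis.Analysis" "HOL-Library.Extended_Real"
begin

text \<open>Base stations are indexed by {1..nI}, users by {1..nJ}.
  x i j is the association indicator, d i the load, p i the per-RB power.\<close>

definition user_assoc :: "nat \<Rightarrow> nat \<Rightarrow> (nat \<Rightarrow> nat \<Rightarrow> real) \<Rightarrow> bool" where
  "user_assoc nI nJ x \<longleftrightarrow>
     (\<forall>i\<in>{1..nI}. \<forall>j\<in>{1..nJ}. x i j = 0 \<or> x i j = 1) \<and>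
     (\<forall>j\<in>{1..nJ}. (\<Sum>i\<in>{1..nI}. x i j) = 1)"

definition sinr :: "nat \<Rightarrow> (nat \<Rightarrow> nat \<Rightarrow> real) \<Rightarrow> real \<Rightarrow> (nat \<Rightarrow> real) \<Rightarrow> (nat \<Rightarrow> real)
                    \<Rightarrow> nat \<Rightarrow> nat \<Rightarrow> real" where
  "sinr nI g sigma2 d p i j =
     p i * g i j / ((\<Sum>k\<in>{1..nI} - {i}. d k * p k * g k j) + sigma2)"

definition rate_arg :: "nat \<Rightarrow> (nat \<Rightarrow> nat \<Rightarrow> real) \<Rightarrow> real \<Rightarrow> (nat \<Rightarrow> real) \<Rightarrow> (nat \<Rightarrow> real)
                    \<Rightarrow> nat \<Rightarrow> nat \<Rightarrow> real" where
  "rate_arg nI g sigma2 d p i j = d i * log 2 (1 + sinr nI g sigma2 d p i j)"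

definition const_C :: "nat \<Rightarrow> nat \<Rightarrow> (nat \<Rightarrow> nat \<Rightarrow> real) \<Rightarrow> real \<Rightarrow> real \<Rightarrow> (nat \<Rightarrow> real) \<Rightarrow> real" where
  "const_C nI nJ x K B \<omega> =
     (\<Sum>i\<in>{1..nI}. \<Sum>j\<in>{1..nJ}. if x i j = 0 then 0 else
        \<omega> j * x i j * log 2 (K * B * \<omega> j / (\<Sum>l\<in>{1..nJ}. \<omega> l * x i l)))"

text \<open>Objective as an extended real: log2 of a nonpositive argument in a term with
  x_ij = 1 is -infinity (log2 0 = -infinity), which makes the whole sum -infinity.\<close>
definition objective ::
  "nat \<Rightarrow> nat \<Rightarrow> (nat \<Rightarrow> nat \<Rightarrow> real) \<Rightarrow> real \<Rightarrow> real \<Rightarrow> (nat \<Rightarrow> nat \<Rightarrow> real) \<Rightarrow> real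
   \<Rightarrow> (nat \<Rightarrow> real) \<Rightarrow> (nat \<Rightarrow> real) \<Rightarrow> (nat \<Rightarrow> real) \<Rightarrow> ereal" where
  "objective nI nJ x K B g sigma2 \<omega> d p =
     (if (\<exists>i\<in>{1..nI}. \<exists>j\<in>{1..nJ}. x i j \<noteq> 0 \<and> rate_arg nI g sigma2 d p i j \<le> 0)
      then -\<infinity>
      else ereal ((\<Sum>i\<in>{1..nI}. \<Sum>j\<in>{1..nJ}. if x i j = 0 then 0 else
                     \<omega> j * x i j * log 2 (rate_arg nI g sigma2 d p i j))
                  + const_C nI nJ x K B \<omega>))"

definition feasible :: "nat \<Rightarrow> (nat \<Rightarrow> real) \<Rightarrow> (nat \<Rightarrow> real) \<Rightarrow> (nat \<Rightarrow> real) \<Rightarrow> bool" where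
  "feasible nI P d p \<longleftrightarrow>
     (\<forall>i\<in>{1..nI}. 0 \<le> d i \<and> d i \<le> 1 \<and> 0 \<le> p i \<and> p i \<le> P i \<and> (p i = 0 \<longleftrightarrow> d i = 0))"

definition optimal ::
  "nat \<Rightarrow> nat \<Rightarrow> (nat \<Rightarrow> nat \<Rightarrow> real) \<Rightarrow> real \<Rightarrow> real \<Rightarrow> (nat \<Rightarrow> nat \<Rightarrow> real) \<Rightarrow> real
   \<Rightarrow> (nat \<Rightarrow> real) \<Rightarrow> (nat \<Rightarrow> real) \<Rightarrow> (nat \<Rightarrow> real) \<Rightarrow> (nat \<Rightarrow> real) \<Rightarrow> bool" where
  "optimal nI nJ x K B g sigma2 \<omega> P d p \<longleftrightarrow>
     feasible nI P d p \<and>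
     (\<forall>d' p'. feasible nI P d' p' \<longrightarrow>
        objective nI nJ x K B g sigma2 \<omega> d' p' \<le> objective nI nJ x K B g sigma2 \<omega> d p)"

end

theory Submission
  imports Defs
begin

lemma ln_conc:
  fixes c s :: real
  assumes "0 < c" "c < 1" "0 < s"
  shows "c * ln (1 + s) < ln (1 + c * s)"
proof -
  let ?f = "\<lambda>t. ln (1 + c * t) - c * ln (1 + t)"
  have "?f 0 < ?f s"
  proof (rule DERIV_pos_imp_increasing_open[OF assms(3)])
    fix t :: real assume t: "0 < t" "t < s"
    have "DERIV ?f t :> c / (1 + c*t) - c * (1 / (1 + t))"
      using t assms by (auto intro!: derivative_eq_intros simp: field_simps add_pos_pos)
    moreover have "c / (1 + c*t) - c * (1 / (1 + t)) > 0"
    proof -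
      have "1 + c*t < 1 + t" using t assms by (simp add: mult_less_cancel_right)
      moreover have "0 < 1 + c*t" using t assms by (simp add: add_pos_pos)
      ultimately have "1 / (1 + t) < 1 / (1 + c*t)" by (simp add: frac_less2)
      hence "c * (1 / (1 + t)) < c * (1 / (1 + c*t))" using assms(1) by (simp only: mult_strict_left_mono)
      thus ?thesis by simp
    qed
    ultimately show "\<exists>y. DERIV ?f t :> y \<and> y > 0" by blast
  next
    show "continuous_on {0..s} ?f"
      using assms by (intro continuous_intros) (auto; smt (verit, best) mult_nonneg_nonneg atLeastAtMost_iff)+
  qed
  thus ?thesis by simp
qed

lemma log2_conc:
  fixes c s :: real
  assumes "0 < c" "c < 1" "0 < s"
  shows "c * log 2 (1 + s) < log 2 (1 + c * s)"
proof -
  have "c * ln (1 + s) / ln 2 < ln (1 + c * s) / ln 2"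
    using ln_conc[OF assms] by (simp add: divide_strict_right_mono)
  thus ?thesis by (simp add: log_def)
qed

lemma obj_less:
  assumes xv: "\<forall>i\<in>{1..nI}. \<forall>j\<in>{1..nJ}. x i j = 0 \<or> x i j = 1"
    and om: "\<forall>j\<in>{1..nJ}. \<omega> j > 0"
    and good: "\<forall>i\<in>{1..nI}. \<forall>j\<in>{1..nJ}. x i j \<noteq> 0 \<longrightarrow> rate_arg nI g sigma2 d p i j > 0"
    and le: "\<forall>i\<in>{1..nI}. \<forall>j\<in>{1..nJ}. x i j \<noteq> 0 \<longrightarrow>
               rate_arg nI g sigma2 d p i j \<le> rate_arg nI g sigma2 d' p' i j"
    and i0: "i0 \<in> {1..nI}" and j0: "j0 \<in> {1..nJ}" and x0: "x i0 j0 \<noteq> 0"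
    and st: "rate_arg nI g sigma2 d p i0 j0 < rate_arg nI g sigma2 d' p' i0 j0"
  shows "objective nI nJ x K B g sigma2 \<omega> d p < objective nI nJ x K B g sigma2 \<omega> d' p'"
proof -
  have c1: "\<not> (\<exists>i\<in>{1..nI}. \<exists>j\<in>{1..nJ}. x i j \<noteq> 0 \<and> rate_arg nI g sigma2 d p i j \<le> 0)"
    using good by force
  have c2: "\<not> (\<exists>i\<in>{1..nI}. \<exists>j\<in>{1..nJ}. x i j \<noteq> 0 \<and> rate_arg nI g sigma2 d' p' i j \<le> 0)"
    using good le by force
  let ?T = "\<lambda>d p i j. if x i j = 0 then 0 else \<omega> j * x i j * log 2 (rate_arg nI g sigma2 d p i j)"
  have tle: "?T d p i j \<le> ?T d' p' i j" if "i \<in> {1..nI}" "j \<in> {1..nJ}" for i j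
  proof (cases "x i j = 0")
    case False
    hence x1: "x i j = 1" using xv that by blast
    have "log 2 (rate_arg nI g sigma2 d p i j) \<le> log 2 (rate_arg nI g sigma2 d' p' i j)"
      using good le that False by (meson less_le_trans log_le_cancel_iff one_less_numeral_iff semiring_norm(76))
    then show ?thesis using x1 om that by (simp add: mult_left_mono)
  qed simp
  have tlt: "?T d p i0 j0 < ?T d' p' i0 j0"
  proof -
    have x1: "x i0 j0 = 1" using xv i0 j0 x0 by blast
    have "log 2 (rate_arg nI g sigma2 d p i0 j0) < log 2 (rate_arg nI g sigma2 d' p' i0 j0)"
    proof -
      have "rate_arg nI g sigma2 d p i0 j0 > 0" using good i0 j0 x0 by auto
      thus ?thesis using st by (subst log_less_cancel_iff) auto
    qed
    then show ?thesis using x1 om j0 by simp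
  qed
  have "(\<Sum>i\<in>{1..nI}. \<Sum>j\<in>{1..nJ}. ?T d p i j) < (\<Sum>i\<in>{1..nI}. \<Sum>j\<in>{1..nJ}. ?T d' p' i j)"
  proof (rule sum_strict_mono_ex1)
    show "\<forall>i\<in>{1..nI}. (\<Sum>j\<in>{1..nJ}. ?T d p i j) \<le> (\<Sum>j\<in>{1..nJ}. ?T d' p' i j)"
      using tle by (auto intro: sum_mono)
    have "(\<Sum>j\<in>{1..nJ}. ?T d p i0 j) < (\<Sum>j\<in>{1..nJ}. ?T d' p' i0 j)"
    proof (rule sum_strict_mono_ex1)
      show "\<forall>j\<in>{1..nJ}. ?T d p i0 j \<le> ?T d' p' i0 j" using tle i0 by blast
      show "\<exists>j\<in>{1..nJ}. ?T d p i0 j < ?T d' p' i0 j" using tlt j0 by blast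
    qed simp
    then show "\<exists>i\<in>{1..nI}. (\<Sum>j\<in>{1..nJ}. ?T d p i j) < (\<Sum>j\<in>{1..nJ}. ?T d' p' i j)"
      using i0 by blast
  qed simp
  then show ?thesis unfolding objective_def using c1 c2 by simp
qed

lemma den_pos:
  fixes d p :: "nat \<Rightarrow> real" and g :: "nat \<Rightarrow> nat \<Rightarrow> real" and sigma2 :: real
  assumes "\<forall>k\<in>{1..nI}. 0 \<le> d k \<and> 0 \<le> p k" and "\<forall>k\<in>{1..nI}. g k j > 0" and "sigma2 > 0"
  shows "(\<Sum>k\<in>{1..nI} - {i}. d k * p k * g k j) + sigma2 > 0"
proof -
  have "(\<Sum>k\<in>{1..nI} - {i}. d k * p k * g k j) \<ge> 0"
    using assms by (intro sum_nonneg) (metis DiffD1 less_imp_le mult_nonneg_nonneg)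
  thus ?thesis using assms by linarith
qed

theorem lemma1:
  fixes nI nJ :: nat
    and x g :: "nat \<Rightarrow> nat \<Rightarrow> real"
    and K B sigma2 :: real
    and \<omega> P d p :: "nat \<Rightarrow> real"
  assumes "nJ \<ge> 1"
    and "K > 0" and "B > 0" and "sigma2 > 0"
    and "\<forall>i\<in>{1..nI}. P i > 0"
    and "\<forall>i\<in>{1..nI}. \<forall>j\<in>{1..nJ}. g i j > 0"
    and "\<forall>j\<in>{1..nJ}. \<omega> j > 0"
    and "user_assoc nI nJ x"
    and "optimal nI nJ x K B g sigma2 \<omega> P d p"
  shows "\<forall>i\<in>{1..nI}. d i = (if \<exists>j\<in>{1..nJ}. x i j = 1 then 1 else 0)"
proof -
  note nJ = assms(1) and sig = assms(4) and Pp = assms(5) and gp = assms(6) and om = assms(7)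
  have xv: "\<forall>i\<in>{1..nI}. \<forall>j\<in>{1..nJ}. x i j = 0 \<or> x i j = 1"
    and xs: "\<forall>j\<in>{1..nJ}. (\<Sum>i\<in>{1..nI}. x i j) = 1"
    using assms(8) unfolding user_assoc_def by auto
  have fe: "feasible nI P d p" and opt: "\<And>d' p'. feasible nI P d' p' \<Longrightarrow>
      objective nI nJ x K B g sigma2 \<omega> d' p' \<le> objective nI nJ x K B g sigma2 \<omega> d p"
    using assms(9) unfolding optimal_def by auto
  have fd: "\<forall>i\<in>{1..nI}. 0 \<le> d i \<and> d i \<le> 1 \<and> 0 \<le> p i \<and> p i \<le> P i \<and> (p i = 0 \<longleftrightarrow> d i = 0)"
    using fe unfolding feasible_def by auto
  let ?R = "\<lambda>d p i j. rate_arg nI g sigma2 d p i j"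
  let ?D = "\<lambda>d p i j. (\<Sum>k\<in>{1..nI} - {i}. d k * p k * g k j) + sigma2"
  have Rdef: "?R d p i j = d i * log 2 (1 + p i * g i j / ?D d p i j)" for d p i j
    unfolding rate_arg_def sinr_def by simp
  have good: "\<forall>i\<in>{1..nI}. \<forall>j\<in>{1..nJ}. x i j \<noteq> 0 \<longrightarrow> ?R d p i j > 0"
  proof -
    define d1 :: "nat \<Rightarrow> real" where "d1 = (\<lambda>i. 1)"
    have f1: "feasible nI P d1 P" unfolding feasible_def d1_def using Pp by auto
    have r1: "?R d1 P i j > 0" if "i \<in> {1..nI}" "j \<in> {1..nJ}" for i j
    proof -
      have "\<forall>k\<in>{1..nI}. 0 \<le> d1 k \<and> 0 \<le> P k" using Pp unfolding d1_def by (simp add: less_imp_le)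
      hence "?D d1 P i j > 0" using den_pos[of nI d1 P g j sigma2 i] gp that sig by auto
      moreover have "P i * g i j > 0" using Pp gp that by auto
      ultimately have "P i * g i j / ?D d1 P i j > 0" by simp
      thus ?thesis unfolding Rdef d1_def by simp
    qed
    have "\<not> (\<exists>i\<in>{1..nI}. \<exists>j\<in>{1..nJ}. x i j \<noteq> 0 \<and> ?R d1 P i j \<le> 0)"
      using r1 by force
    hence "objective nI nJ x K B g sigma2 \<omega> d1 P \<noteq> -\<infinity>"
      unfolding objective_def by simp
    hence "objective nI nJ x K B g sigma2 \<omega> d p \<noteq> -\<infinity>"
      using opt[OF f1] by auto
    thus ?thesis unfolding objective_def by (auto split: if_splits simp: not_le)
  qed
  have dennz: "?D d p k j > 0" if "j \<in> {1..nJ}" for k j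
    using den_pos[of nI d p g j sigma2 k] fd gp that sig by auto
  have serv: "d k > 0 \<and> p k > 0 \<and> p k * g k j / ?D d p k j > 0"
    if "k \<in> {1..nI}" "j \<in> {1..nJ}" "x k j \<noteq> 0" for k j
  proof -
    have pos: "?R d p k j > 0" using good that by auto
    have dk: "d k \<ge> 0" "p k \<ge> 0" using fd that by auto
    have "g k j > 0" using gp that by auto
    hence s0: "p k * g k j / ?D d p k j \<ge> 0" using dk dennz[of j k] that
      by (meson divide_nonneg_pos less_imp_le mult_nonneg_nonneg)
    have dp: "d k > 0" using pos dk unfolding Rdef
      by (metis less_eq_real_def mult_eq_0_iff order_less_irrefl)
    have "log 2 (1 + p k * g k j / ?D d p k j) > 0" using pos dp unfolding Rdef
      by (simp add: zero_less_mult_iff)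
    hence "p k * g k j / ?D d p k j \<noteq> 0" by auto
    moreover have "p k > 0" using fd that dp by force
    ultimately show ?thesis using s0 dp by (simp add: less_le)
  qed
  show ?thesis
  proof
    fix i assume i: "i \<in> {1..nI}"
    show "d i = (if \<exists>j\<in>{1..nJ}. x i j = 1 then 1 else 0)"
    proof (cases "\<exists>j\<in>{1..nJ}. x i j = 1")
      case True
      then obtain j0 where j0: "j0 \<in> {1..nJ}" "x i j0 = 1" by blast
      have di: "d i > 0" "p i > 0" using serv[OF i j0(1)] j0 by auto
      have "d i = 1"
      proof (rule ccontr)
        assume "d i \<noteq> 1"
        hence dl: "d i < 1" using fd i by force
        define d' where "d' = d(i := 1)"
        define p' where "p' = p(i := d i * p i)"
        have f': "feasible nI P d' p'" unfolding feasible_def d'_def p'_def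
        proof
          fix k assume k: "k \<in> {1..nI}"
          have "d i * p i \<le> p i" using di dl by (simp add: mult_left_le_one_le less_imp_le)
          moreover have "p i \<le> P i" using fd i by blast
          ultimately have dpP: "d i * p i \<le> P i" by linarith
          thus "0 \<le> (d(i := 1)) k \<and> (d(i := 1)) k \<le> 1 \<and> 0 \<le> (p(i := d i * p i)) k \<and>
            (p(i := d i * p i)) k \<le> P k \<and> ((p(i := d i * p i)) k = 0 \<longleftrightarrow> (d(i := 1)) k = 0)"
            using fd k i di dpP by auto
        qed
        have Deq: "?D d' p' k j = ?D d p k j" for k j
          by (rule arg_cong[where f="\<lambda>s. s + sigma2"], rule sum.cong)
             (auto simp: d'_def p'_def)
        have le: "\<forall>k\<in>{1..nI}. \<forall>j\<in>{1..nJ}. x k j \<noteq> 0 \<longrightarrow> ?R d p k j \<le> ?R d' p' k j"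
          and st: "?R d p i j0 < ?R d' p' i j0"
        proof -
          have lt: "?R d p i j < ?R d' p' i j" if j: "j \<in> {1..nJ}" "x i j \<noteq> 0" for j
          proof -
            let ?s = "p i * g i j / ?D d p i j"
            have s: "?s > 0" using serv[OF i j] by auto
            have "?R d' p' i j = log 2 (1 + d i * ?s)"
              unfolding Rdef Deq by (simp add: d'_def p'_def mult.assoc)
            moreover have "?R d p i j = d i * log 2 (1 + ?s)" unfolding Rdef by simp
            ultimately show ?thesis using log2_conc[OF di(1) dl s] by simp
          qed
          show "?R d p i j0 < ?R d' p' i j0" using lt j0 by auto
          show "\<forall>k\<in>{1..nI}. \<forall>j\<in>{1..nJ}. x k j \<noteq> 0 \<longrightarrow> ?R d p k j \<le> ?R d' p' k j"
          proof (intro ballI impI)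
            fix k j assume k: "k \<in> {1..nI}" and j: "j \<in> {1..nJ}" and xkj: "x k j \<noteq> 0"
            show "?R d p k j \<le> ?R d' p' k j"
            proof (cases "k = i")
              case True thus ?thesis using lt j xkj by (simp add: less_imp_le)
            next
              case False thus ?thesis unfolding Rdef Deq by (simp add: d'_def p'_def)
            qed
          qed
        qed
        have "objective nI nJ x K B g sigma2 \<omega> d p < objective nI nJ x K B g sigma2 \<omega> d' p'"
          by (rule obj_less[OF xv om good le i j0(1)]) (use j0 st in auto)
        thus False using opt[OF f'] by simp
      qed
      thus ?thesis using True by simp
    next
      case False
      have xi0: "x i j = 0" if "j \<in> {1..nJ}" for j using xv i that False by blast
      have "d i = 0"
      proof (rule ccontr)
        assume "d i \<noteq> 0"
        hence di: "d i > 0" "p i > 0" using fd i by force+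
        define d' where "d' = d(i := 0)"
        define p' where "p' = p(i := 0)"
        have f': "feasible nI P d' p'" unfolding feasible_def d'_def p'_def
          using fd Pp by (auto simp: less_imp_le)
        have j1: "1 \<in> {1..nJ}" using nJ by auto
        obtain k0 where k0: "k0 \<in> {1..nI}" "x k0 1 \<noteq> 0"
        proof -
          have "\<exists>k\<in>{1..nI}. x k 1 \<noteq> 0"
          proof (rule ccontr)
            assume "\<not> ?thesis"
            hence "(\<Sum>k\<in>{1..nI}. x k 1) = 0" by simp
            thus False using xs j1 by simp
          qed
          thus ?thesis using that by blast
        qed
        have Dlt: "?D d' p' k j < ?D d p k j" if k: "k \<in> {1..nI}" "k \<noteq> i" and j: "j \<in> {1..nJ}" for k j
        proof -
          have iin: "i \<in> {1..nI} - {k}" using i k by auto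
          have "(\<Sum>k'\<in>{1..nI} - {k}. d k' * p k' * g k' j) =
                d i * p i * g i j + (\<Sum>k'\<in>{1..nI} - {k} - {i}. d k' * p k' * g k' j)"
            by (rule sum.remove[OF _ iin]) simp
          moreover have "(\<Sum>k'\<in>{1..nI} - {k}. d' k' * p' k' * g k' j) =
                d' i * p' i * g i j + (\<Sum>k'\<in>{1..nI} - {k} - {i}. d' k' * p' k' * g k' j)"
            by (rule sum.remove[OF _ iin]) simp
          moreover have "(\<Sum>k'\<in>{1..nI} - {k} - {i}. d' k' * p' k' * g k' j) =
                (\<Sum>k'\<in>{1..nI} - {k} - {i}. d k' * p k' * g k' j)"
            by (rule sum.cong) (auto simp: d'_def p'_def)
          moreover have "d i * p i * g i j > 0" using di gp i j by auto
          ultimately show ?thesis by (simp add: d'_def p'_def)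
        qed
        have lt: "?R d p k j < ?R d' p' k j"
          if k: "k \<in> {1..nI}" and j: "j \<in> {1..nJ}" and xkj: "x k j \<noteq> 0" for k j
        proof -
          have ki: "k \<noteq> i" using xkj xi0 j by auto
          have sv: "d k > 0" "p k > 0" using serv[OF k j xkj] by auto
          have D'p: "?D d' p' k j > 0"
            using den_pos[of nI d' p' g j sigma2 k] f' gp j sig unfolding feasible_def by auto
          have "p k * g k j / ?D d p k j < p k * g k j / ?D d' p' k j"
            using Dlt[OF k ki j] D'p sv gp k j by (intro divide_strict_left_mono) auto
          hence "log 2 (1 + p k * g k j / ?D d p k j) < log 2 (1 + p' k * g k j / ?D d' p' k j)"
            using serv[OF k j xkj] ki by (subst log_less_cancel_iff) (auto simp: p'_def)
          thus ?thesis unfolding Rdef using sv ki by (simp add: d'_def)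
        qed
        have "objective nI nJ x K B g sigma2 \<omega> d p < objective nI nJ x K B g sigma2 \<omega> d' p'"
        proof (rule obj_less[OF xv om good _ k0(1) j1 k0(2)])
          show "\<forall>k\<in>{1..nI}. \<forall>j\<in>{1..nJ}. x k j \<noteq> 0 \<longrightarrow> ?R d p k j \<le> ?R d' p' k j"
            using lt by (meson less_imp_le)
          show "?R d p k0 1 < ?R d' p' k0 1" using lt k0 j1 by blast
        qed
        thus False using opt[OF f'] by simp
      qed
      thus ?thesis using False by simp
    qed
  qed
qed

end
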